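(* Let $m\geq 1$, $n\geq 3$ and $p\geq 2$ be integers, and let $i,j\in V$. There exists a walk of length $pn-1$ from $i$ to $j$ in $D^m_n$ if and only if there exists a walk of length $n-1$ from $i$ to $j$ in $D^m_n$. In such cases, the number of walks of length $pn-1$ from $i$ to $j$ in $D^m_n$ is exactly $m^{p-1}$.
   Context: For integers $m\geq 1$, $n\geq 3$, the oriented Dutch windmill graph $D^m_n$ is the directed graph with vertex set $V=\{1,2,\ldots,m(n-1)+1\}$ whose directed edges $(a,b)$ are exactly: $(1,(k-1)(n-1)+2)$ for $k\in\{1,\ldots,m\}$; $((k-1)(n-1)+i,(k-1)(n-1)+i+1)$ for $k\in\{1,\ldots,m\}$ and $i\in\{2,\ldots,n-1\}$; and $((k-1)(n-1)+n,1)$ for $k\in\{1,\ldots,m\}$. A walk is a sequence of vertices $\langle v_1,\ldots,v_r\rangle$ in which each $(v_t,v_{t+1})$ is an edge; its length is $r-1$; walks are distinct when they are distinct sequences. *)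

theory Defs
  imports Main
begin

definition dw_verts :: "nat \<Rightarrow> nat \<Rightarrow> nat set" where
  "dw_verts m n = {1 .. m * (n - 1) + 1}"

definition dw_edge :: "nat \<Rightarrow> nat \<Rightarrow> nat \<Rightarrow> nat \<Rightarrow> bool" where
  "dw_edge m n a b \<longleftrightarrow>
     (\<exists>k\<in>{1..m}. a = 1 \<and> b = (k - 1) * (n - 1) + 2) \<or>
     (\<exists>k\<in>{1..m}. \<exists>i\<in>{2..n - 1}. a = (k - 1) * (n - 1) + i \<and> b = (k - 1) * (n - 1) + i + 1) \<or>
     (\<exists>k\<in>{1..m}. a = (k - 1) * (n - 1) + n \<and> b = 1)"

definition dw_is_walk :: "nat \<Rightarrow> nat \<Rightarrow> nat list \<Rightarrow> bool" where
  "dw_is_walk m n w \<longleftrightarrow> w \<noteq> [] \<and> set w \<subseteq> dw_verts m n \<and>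
     (\<forall>t. Suc t < length w \<longrightarrow> dw_edge m n (w ! t) (w ! Suc t))"

definition dw_walks :: "nat \<Rightarrow> nat \<Rightarrow> nat \<Rightarrow> nat \<Rightarrow> nat \<Rightarrow> nat list set" where
  "dw_walks m n L i j = {w. dw_is_walk m n w \<and> length w = L + 1 \<and> hd w = i \<and> last w = j}"

end

theory Submission imports Defs begin

definition C :: "nat \<Rightarrow> nat \<Rightarrow> nat \<Rightarrow> nat \<Rightarrow> nat \<Rightarrow> nat" where
  "C m n L i j = card (dw_walks m n L i j)"

definition E :: "nat \<Rightarrow> nat \<Rightarrow> nat \<Rightarrow> nat \<Rightarrow> nat" where
  "E m n i x = (if i \<in> dw_verts m n \<and> x \<in> dw_verts m n \<and> dw_edge m n i x then 1 else 0)"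

lemma walk_cons:
  "dw_is_walk m n (a # w) \<longleftrightarrow> a \<in> dw_verts m n \<and> (w = [] \<or> (dw_edge m n a (hd w) \<and> dw_is_walk m n w))"
proof -
  have q: "(\<forall>t. Suc t < length (a # w) \<longrightarrow> dw_edge m n ((a # w) ! t) ((a # w) ! Suc t))
     \<longleftrightarrow> (w \<noteq> [] \<longrightarrow> dw_edge m n a (hd w)) \<and> (\<forall>t. Suc t < length w \<longrightarrow> dw_edge m n (w ! t) (w ! Suc t))"
  proof (intro iffI conjI allI impI)
    fix t assume h: "\<forall>t. Suc t < length (a # w) \<longrightarrow> dw_edge m n ((a # w) ! t) ((a # w) ! Suc t)"
      and "Suc t < length w"
    then show "dw_edge m n (w ! t) (w ! Suc t)" using h[rule_format, of "Suc t"] by simp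
  next
    assume h: "\<forall>t. Suc t < length (a # w) \<longrightarrow> dw_edge m n ((a # w) ! t) ((a # w) ! Suc t)"
      and "w \<noteq> []"
    then show "dw_edge m n a (hd w)" using h[rule_format, of 0] by (simp add: hd_conv_nth)
  next
    fix t assume h: "(w \<noteq> [] \<longrightarrow> dw_edge m n a (hd w)) \<and> (\<forall>t. Suc t < length w \<longrightarrow> dw_edge m n (w ! t) (w ! Suc t))"
      and t: "Suc t < length (a # w)"
    show "dw_edge m n ((a # w) ! t) ((a # w) ! Suc t)"
    proof (cases t)
      case 0 then show ?thesis using h t by (auto simp: hd_conv_nth)
    next
      case (Suc s) then show ?thesis using h t by auto
    qed
  qed
  show ?thesis unfolding dw_is_walk_def q by auto
qed

lemma walks0: "dw_walks m n 0 i j = (if i = j \<and> i \<in> dw_verts m n then {[i]} else {})"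
  unfolding dw_walks_def dw_is_walk_def by (auto simp: length_Suc_conv)

lemma walksSuc: "dw_walks m n (Suc L) i j =
  (\<Union>x\<in>dw_verts m n. if i \<in> dw_verts m n \<and> dw_edge m n i x then (Cons i) ` dw_walks m n L x j else {})"
proof (intro set_eqI iffI)
  fix w assume "w \<in> dw_walks m n (Suc L) i j"
  then obtain w' where w: "w = i # w'" "w' \<noteq> []" "dw_is_walk m n w" "length w' = Suc L" "last w' = j"
  proof -
    from \<open>w \<in> dw_walks m n (Suc L) i j\<close> have h: "dw_is_walk m n w" "length w = Suc (Suc L)" "hd w = i" "last w = j"
      unfolding dw_walks_def by auto
    then obtain w' where "w = i # w'" by (cases w) auto
    with h show ?thesis using that by (cases w') auto
  qed
  then have "dw_edge m n i (hd w')" "dw_is_walk m n w'" "i \<in> dw_verts m n"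
    using walk_cons by auto
  moreover have "hd w' \<in> dw_verts m n" using \<open>dw_is_walk m n w'\<close> \<open>w' \<noteq> []\<close>
    unfolding dw_is_walk_def by auto
  ultimately show "w \<in> (\<Union>x\<in>dw_verts m n. if i \<in> dw_verts m n \<and> dw_edge m n i x then (Cons i) ` dw_walks m n L x j else {})"
    using w unfolding dw_walks_def by (intro UN_I[of "hd w'"]) auto
next
  fix w assume "w \<in> (\<Union>x\<in>dw_verts m n. if i \<in> dw_verts m n \<and> dw_edge m n i x then (Cons i) ` dw_walks m n L x j else {})"
  then obtain x w' where "x \<in> dw_verts m n" "i \<in> dw_verts m n" "dw_edge m n i x" "w = i # w'"
     "w' \<in> dw_walks m n L x j" by (auto split: if_splits)
  then show "w \<in> dw_walks m n (Suc L) i j"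
    unfolding dw_walks_def using walk_cons[of m n i w'] by (cases w') auto
qed

lemma finite_walks: "finite (dw_walks m n L i j)"
proof -
  have "dw_walks m n L i j \<subseteq> {w. set w \<subseteq> dw_verts m n \<and> length w = L + 1}"
    unfolding dw_walks_def dw_is_walk_def by auto
  moreover have "finite {w. set w \<subseteq> dw_verts m n \<and> length w = L + 1}"
    by (rule finite_lists_length_eq) (simp add: dw_verts_def)
  ultimately show ?thesis by (rule finite_subset)
qed

lemma fin_V[simp]: "finite (dw_verts m n)" by (simp add: dw_verts_def)

lemma sum_ind: "finite S \<Longrightarrow> (\<Sum>x\<in>S. (if x = w then 1 else 0) * (g x::nat)) = (if w \<in> S then g w else 0)"
proof -
  assume f: "finite S"
  have "(\<Sum>x\<in>S. (if x = w then 1 else 0) * (g x::nat)) = (\<Sum>x\<in>S. if x = w then g x else 0)"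
    by (rule sum.cong) auto
  then show ?thesis using f by (simp add: sum.delta)
qed

lemma C0: "C m n 0 i j = (if i = j \<and> i \<in> dw_verts m n then 1 else 0)"
  unfolding C_def walks0 by auto

lemma CSuc': "C m n (Suc L) i j = (\<Sum>x\<in>dw_verts m n. if i \<in> dw_verts m n \<and> dw_edge m n i x then C m n L x j else 0)"
proof -
  have "C m n (Suc L) i j = (\<Sum>x\<in>dw_verts m n. card (if i \<in> dw_verts m n \<and> dw_edge m n i x then (Cons i) ` dw_walks m n L x j else {}))"
    unfolding C_def walksSuc
    by (rule card_UN_disjoint) (auto simp: finite_walks dw_walks_def[symmetric] intro!: finite_imageI, auto simp: dw_walks_def)
  also have "\<dots> = (\<Sum>x\<in>dw_verts m n. if i \<in> dw_verts m n \<and> dw_edge m n i x then C m n L x j else 0)"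
    by (rule sum.cong) (auto simp: C_def card_image)
  finally show ?thesis .
qed

lemma C1: "C m n 1 i x = E m n i x"
proof -
  have "C m n 1 i x = (\<Sum>y\<in>dw_verts m n. if y = x then (if i \<in> dw_verts m n \<and> dw_edge m n i y \<and> y \<in> dw_verts m n then 1 else 0) else 0)"
    unfolding One_nat_def CSuc' C0 by (rule sum.cong) auto
  also have "\<dots> = E m n i x" by (simp add: sum.delta E_def)
  finally show ?thesis .
qed

lemma CSuc: "C m n (Suc L) i j = (\<Sum>x\<in>dw_verts m n. C m n 1 i x * C m n L x j)"
  unfolding CSuc' C1 E_def by (rule sum.cong) auto

lemma Cout: "i \<notin> dw_verts m n \<Longrightarrow> C m n L i j = 0"
proof (cases L)
  case 0 assume "i \<notin> dw_verts m n" then show ?thesis using 0 by (simp add: C0)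
next
  case (Suc L') assume "i \<notin> dw_verts m n" then show ?thesis using Suc CSuc[of m n L' i j] by (simp add: C1[unfolded One_nat_def] E_def)
qed

lemma concat: "C m n (L1 + L2) i j = (\<Sum>x\<in>dw_verts m n. C m n L1 i x * C m n L2 x j)"
proof (induction L1 arbitrary: i)
  case 0
  show ?case
  proof (cases "i \<in> dw_verts m n")
    case True
    have "(\<Sum>x\<in>dw_verts m n. C m n 0 i x * C m n L2 x j) = (\<Sum>x\<in>dw_verts m n. (if x = i then 1 else 0) * C m n L2 x j)"
      using True by (intro sum.cong) (auto simp: C0)
    also have "\<dots> = C m n L2 i j" using True sum_ind[OF fin_V, of i "\<lambda>x. C m n L2 x j"] by simp
    finally show ?thesis by simp
  next
    case False then show ?thesis by (simp add: C0 Cout)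
  qed
next
  case (Suc L1)
  have "C m n (Suc L1 + L2) i j = (\<Sum>y\<in>dw_verts m n. C m n 1 i y * C m n (L1 + L2) y j)"
    using CSuc[of m n "L1 + L2" i j] by simp
  also have "\<dots> = (\<Sum>y\<in>dw_verts m n. \<Sum>x\<in>dw_verts m n. C m n 1 i y * (C m n L1 y x * C m n L2 x j))"
    unfolding Suc.IH sum_distrib_left by (rule refl)
  also have "\<dots> = (\<Sum>x\<in>dw_verts m n. \<Sum>y\<in>dw_verts m n. C m n 1 i y * C m n L1 y x * C m n L2 x j)"
    by (subst sum.swap) (simp only: mult.assoc)
  also have "\<dots> = (\<Sum>x\<in>dw_verts m n. C m n (Suc L1) i x * C m n L2 x j)"
    unfolding CSuc[of m n L1] sum_distrib_right by (rule refl)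
  finally show ?case .
qed


definition vt :: "nat \<Rightarrow> nat \<Rightarrow> nat \<Rightarrow> nat" where
  "vt n k c = k * (n - 1) + c + 1"

definition layer :: "nat \<Rightarrow> nat \<Rightarrow> nat \<Rightarrow> nat set" where
  "layer m n c = (\<lambda>k. vt n k c) ` {..<m}"

lemma vt_ne1: "c \<ge> 1 \<Longrightarrow> vt n k c \<noteq> 1"
  by (simp add: vt_def)

lemma vt_in: "k < m \<Longrightarrow> 1 \<le> c \<Longrightarrow> c \<le> n - 1 \<Longrightarrow> vt n k c \<in> dw_verts m n"
proof -
  assume a: "k < m" "1 \<le> c" "c \<le> n - 1"
  have "k * (n - 1) + (n - 1) \<le> m * (n - 1)"
    using a(1) by (metis Suc_leI add.commute mult_Suc mult_le_mono1)
  then show ?thesis using a unfolding vt_def dw_verts_def by auto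
qed

lemma vt_inj: "1 \<le> c \<Longrightarrow> c \<le> n - 1 \<Longrightarrow> 1 \<le> c' \<Longrightarrow> c' \<le> n - 1 \<Longrightarrow>
   vt n k c = vt n k' c' \<Longrightarrow> k = k' \<and> c = c'"
proof -
  assume a: "1 \<le> c" "c \<le> n - 1" "1 \<le> c'" "c' \<le> n - 1" "vt n k c = vt n k' c'"
  define N where "N = n - 1"
  have e: "k * N + (c - 1) = k' * N + (c' - 1)" using a unfolding vt_def N_def by auto
  have p: "N > 0" using a N_def by auto
  have r: "c - 1 < N" "c' - 1 < N" using a N_def by auto
  have "(k * N + (c - 1)) div N = k" "(k' * N + (c' - 1)) div N = k'"
    using r p by simp_all
  moreover have "(k * N + (c - 1)) mod N = c - 1" "(k' * N + (c' - 1)) mod N = c' - 1"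
    using r p by simp_all
  ultimately show ?thesis using e a by (metis le_add_diff_inverse2 le_add_diff_inverse) 
qed

lemma V_cases: "x \<in> dw_verts m n \<Longrightarrow> n \<ge> 3 \<Longrightarrow>
   x = 1 \<or> (\<exists>k<m. \<exists>c. 1 \<le> c \<and> c \<le> n - 1 \<and> x = vt n k c)"
proof -
  assume x: "x \<in> dw_verts m n" and n: "n \<ge> 3"
  define N where "N = n - 1"
  have p: "N > 0" using n N_def by auto
  show ?thesis
  proof (cases "x = 1")
    case False
    then have x2: "x \<ge> 2" "x - 2 < m * N" using x unfolding dw_verts_def N_def by auto
    define k where "k = (x - 2) div N"
    define c where "c = (x - 2) mod N + 1"
    have "k < m" using x2 p unfolding k_def by (simp add: less_mult_imp_div_less)
    moreover have "1 \<le> c" "c \<le> N" using p unfolding c_def by (auto simp: Suc_leI)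
    moreover have "x = vt n k c" unfolding vt_def k_def c_def N_def[symmetric]
      using x2 by (metis add.assoc div_mult_mod_eq le_add_diff_inverse2 one_add_one)
    ultimately show ?thesis unfolding N_def by blast
  qed simp
qed


lemma E_one: "n \<ge> 3 \<Longrightarrow> dw_edge m n 1 b \<longleftrightarrow> (\<exists>k<m. b = vt n k 1)"
proof
  assume n: "n \<ge> 3" and "dw_edge m n 1 b"
  then obtain k where "k \<in> {1..m}" "b = (k - 1) * (n - 1) + 2"
    unfolding dw_edge_def by auto
  then show "\<exists>k<m. b = vt n k 1" unfolding vt_def by (intro exI[of _ "k - 1"]) auto
next
  assume n: "n \<ge> 3" and "\<exists>k<m. b = vt n k 1"
  then obtain k where "k < m" "b = vt n k 1" by auto
  then show "dw_edge m n 1 b" unfolding dw_edge_def vt_def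
    by (intro disjI1 bexI[of _ "k + 1"]) auto
qed

lemma E_vt: assumes n: "n \<ge> 3" and k: "k < m" and c: "1 \<le> c" "c \<le> n - 1"
  shows "dw_edge m n (vt n k c) b \<longleftrightarrow> (if c < n - 1 then b = vt n k (c + 1) else b = 1)"
proof
  assume "dw_edge m n (vt n k c) b"
  then consider (a) "vt n k c = 1"
    | (b) k' i where "k' \<in> {1..m}" "i \<in> {2..n - 1}" "vt n k c = (k' - 1) * (n - 1) + i" "b = (k' - 1) * (n - 1) + i + 1"
    | (c) k' where "k' \<in> {1..m}" "vt n k c = (k' - 1) * (n - 1) + n" "b = 1"
    unfolding dw_edge_def by blast
  then show "if c < n - 1 then b = vt n k (c + 1) else b = 1"
  proof cases
    case a then show ?thesis using vt_ne1 c by blast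
  next
    case (b k' i)
    have "vt n k c = vt n (k' - 1) (i - 1)" using b unfolding vt_def by auto
    moreover have "1 \<le> i - 1" "i - 1 \<le> n - 1" using b by auto
    ultimately have "k = k' - 1 \<and> c = i - 1" using vt_inj[of c n "i - 1" k "k' - 1"] c by blast
    then show ?thesis using b c unfolding vt_def by auto
  next
    case (c k')
    have "vt n k c = vt n (k' - 1) (n - 1)" using c n unfolding vt_def by auto
    then have "c = n - 1" using vt_inj[of c n "n - 1" k "k' - 1"] c n \<open>1 \<le> c\<close> \<open>c \<le> n - 1\<close> by auto
    then show ?thesis using c by auto
  qed
next
  assume h: "if c < n - 1 then b = vt n k (c + 1) else b = 1"
  show "dw_edge m n (vt n k c) b"
  proof (cases "c < n - 1")
    case True
    then show ?thesis using h k c unfolding dw_edge_def vt_def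
      by (intro disjI2 disjI1 bexI[of _ "k + 1"] bexI[of _ "c + 1"]) auto
  next
    case False
    then have "c = n - 1" using c by auto
    then show ?thesis using h k c n False unfolding dw_edge_def vt_def
      by (intro disjI2 disjI2 bexI[of _ "k + 1"]) auto
  qed
qed


context
  fixes m n :: nat
  assumes n3: "n \<ge> 3"
begin

lemma C1_one: "C m n 1 1 x = (if x \<in> layer m n 1 then 1 else 0)"
proof -
  have "1 \<in> dw_verts m n" by (simp add: dw_verts_def)
  moreover have "x \<in> layer m n 1 \<Longrightarrow> x \<in> dw_verts m n"
    unfolding layer_def using vt_in n3 by auto
  ultimately show ?thesis unfolding C1 E_def using E_one[OF n3] unfolding layer_def by auto
qed

lemma C1_vt: assumes k: "k < m" and c: "1 \<le> c" "c \<le> n - 1"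
  shows "C m n 1 (vt n k c) x = (if c < n - 1 then (if x = vt n k (c + 1) then 1 else 0) else (if x = 1 then 1 else 0))"
proof -
  have "vt n k c \<in> dw_verts m n" using vt_in k c by auto
  moreover have "c < n - 1 \<Longrightarrow> vt n k (c + 1) \<in> dw_verts m n" using vt_in k c by auto
  moreover have "1 \<in> dw_verts m n" by (simp add: dw_verts_def)
  ultimately show ?thesis unfolding C1 E_def using E_vt[OF n3 k c] by auto
qed

lemma sum_pt: "w \<in> dw_verts m n \<Longrightarrow> (\<Sum>x\<in>dw_verts m n. (if x = w then 1 else 0) * g x) = (g w :: nat)"
  using sum_ind[OF fin_V, of w g] by simp

lemma layer_sub: "1 \<le> c \<Longrightarrow> c \<le> n - 1 \<Longrightarrow> layer m n c \<subseteq> dw_verts m n"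
  unfolding layer_def using vt_in by auto

lemma inj_layer: "1 \<le> c \<Longrightarrow> c \<le> n - 1 \<Longrightarrow> inj_on (\<lambda>k. vt n k c) A"
  by (rule inj_onI) (use vt_inj in blast)

lemma sum_layer: assumes c: "1 \<le> c" "c \<le> n - 1"
  shows "(\<Sum>x\<in>dw_verts m n. (if x \<in> layer m n c then 1 else 0) * g x) = (\<Sum>k<m. (g (vt n k c) :: nat))"
proof -
  have "(\<Sum>x\<in>dw_verts m n. (if x \<in> layer m n c then 1 else 0) * g x) = (\<Sum>x\<in>dw_verts m n. if x \<in> layer m n c then g x else 0)"
    by (rule sum.cong) auto
  also have "\<dots> = sum g (layer m n c)"
    using sum.inter_restrict[OF fin_V[of m n], where g=g and B="layer m n c"] layer_sub[OF c] by (simp add: Int_absorb1)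
  also have "\<dots> = (\<Sum>k<m. g (vt n k c))"
    unfolding layer_def by (rule sum.reindex_cong[OF inj_layer[OF c]]) auto
  finally show ?thesis .
qed

lemma chain: assumes k: "k < m" and c: "1 \<le> c" shows "c + t \<le> n - 1 \<Longrightarrow>
  C m n t (vt n k c) j = (if j = vt n k (c + t) then 1 else 0)"
proof (induction t arbitrary: j)
  case 0
  then show ?case using vt_in[OF k c] by (simp add: C0)
next
  case (Suc t)
  have "C m n (Suc t) (vt n k c) j = C m n (t + 1) (vt n k c) j" by simp
  also have "\<dots> = (\<Sum>x\<in>dw_verts m n. (if x = vt n k (c + t) then 1 else 0) * C m n 1 x j)"
    unfolding concat using Suc by (intro sum.cong) auto
  also have "\<dots> = C m n 1 (vt n k (c + t)) j"
    by (rule sum_pt) (use vt_in k c Suc in auto)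
  also have "\<dots> = (if j = vt n k (c + Suc t) then 1 else 0)"
    using C1_vt[OF k, of "c + t"] c Suc by auto
  finally show ?case .
qed

lemma toOne: assumes k: "k < m" and c: "1 \<le> c" "c \<le> n - 1"
  shows "C m n (n - c) (vt n k c) j = (if j = 1 then 1 else 0)"
proof -
  have "C m n (n - c) (vt n k c) j = C m n ((n - 1 - c) + 1) (vt n k c) j"
    using c by (simp add: Suc_diff_Suc)
  also have "\<dots> = (\<Sum>x\<in>dw_verts m n. (if x = vt n k (n - 1) then 1 else 0) * C m n 1 x j)"
    unfolding concat using chain[OF k c(1), of "n - 1 - c"] c by (intro sum.cong) auto
  also have "\<dots> = C m n 1 (vt n k (n - 1)) j"
    by (rule sum_pt) (use vt_in k c in auto)
  also have "\<dots> = (if j = 1 then 1 else 0)"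
    using C1_vt[OF k, of "n - 1"] c n3 by auto
  finally show ?thesis .
qed

lemma sum_vt_ind: assumes t: "1 \<le> t" "t \<le> n - 1"
  shows "(\<Sum>k<m. (if j = vt n k t then 1 else 0 :: nat)) = (if j \<in> layer m n t then 1 else 0)"
proof (cases "j \<in> layer m n t")
  case True
  then obtain k0 where k0: "k0 < m" "j = vt n k0 t" unfolding layer_def by auto
  have "(\<Sum>k<m. (if j = vt n k t then 1 else 0 :: nat)) = (\<Sum>k<m. (if k = k0 then 1 else 0 :: nat))"
    using k0 vt_inj[OF t t] by (intro sum.cong) auto
  also have "\<dots> = 1" using k0 by (simp add: sum.delta)
  finally show ?thesis using True by simp
next
  case False
  then have "\<And>k. k < m \<Longrightarrow> j \<noteq> vt n k t" unfolding layer_def by auto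
  then show ?thesis using False by simp
qed

lemma fromOne: assumes t: "1 \<le> t" "t \<le> n - 1"
  shows "C m n t 1 j = (if j \<in> layer m n t then 1 else 0)"
proof -
  have "C m n t 1 j = C m n (1 + (t - 1)) 1 j" using t by simp
  also have "\<dots> = (\<Sum>x\<in>dw_verts m n. (if x \<in> layer m n 1 then 1 else 0) * C m n (t - 1) x j)"
    unfolding concat C1_one by simp
  also have "\<dots> = (\<Sum>k<m. C m n (t - 1) (vt n k 1) j)"
    by (rule sum_layer) (use n3 in auto)
  also have "\<dots> = (\<Sum>k<m. (if j = vt n k t then 1 else 0))"
    using chain[of _ 1 "t - 1" j] t by (intro sum.cong) auto
  also have "\<dots> = (if j \<in> layer m n t then 1 else 0)" by (rule sum_vt_ind[OF t])
  finally show ?thesis .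
qed

end


context
  fixes m n :: nat
  assumes n3: "n \<ge> 3"
begin

lemma CN_vt: assumes k: "k < m" and c: "1 \<le> c" "c \<le> n - 1"
  shows "C m n (n - 1) (vt n k c) j = (if c = 1 then (if j = 1 then 1 else 0) else (if j \<in> layer m n (c - 1) then 1 else 0))"
proof -
  have "C m n (n - 1) (vt n k c) j = C m n ((n - c) + (c - 1)) (vt n k c) j" using c by simp
  also have "\<dots> = (\<Sum>x\<in>dw_verts m n. (if x = 1 then 1 else 0) * C m n (c - 1) x j)"
    unfolding concat using toOne[OF n3 k c] by simp
  also have "\<dots> = C m n (c - 1) 1 j" by (rule sum_pt[OF n3]) (auto simp: dw_verts_def)
  also have "\<dots> = (if c = 1 then (if j = 1 then 1 else 0) else (if j \<in> layer m n (c - 1) then 1 else 0))"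
    using fromOne[OF n3, of "c - 1" m j] c by (auto simp: C0 dw_verts_def)
  finally show ?thesis .
qed

lemma CN_le1: "C m n (n - 1) i j \<le> 1"
proof (cases "i \<in> dw_verts m n")
  case True
  then consider "i = 1" | k c where "k < m" "1 \<le> c" "c \<le> n - 1" "i = vt n k c"
    using V_cases n3 by blast
  then show ?thesis
  proof cases
    case 1 then show ?thesis using fromOne[OF n3, of "n - 1" m j] n3 by auto
  next
    case 2 then show ?thesis using CN_vt by auto
  qed
qed (simp add: Cout)

lemma Cn_one: "C m n n 1 x = (if x = 1 then m else 0)"
proof -
  have "C m n n 1 x = C m n ((n - 1) + 1) 1 x" using n3 by simp
  also have "\<dots> = (\<Sum>y\<in>dw_verts m n. (if y \<in> layer m n (n - 1) then 1 else 0) * C m n 1 y x)"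
    unfolding concat using fromOne[OF n3, of "n - 1" m] n3 by simp
  also have "\<dots> = (\<Sum>k<m. C m n 1 (vt n k (n - 1)) x)"
    by (rule sum_layer[OF n3]) (use n3 in auto)
  also have "\<dots> = (\<Sum>k<m. (if x = 1 then 1 else 0))"
    using C1_vt[OF n3, of _ m "n - 1" x] n3 by (intro sum.cong) auto
  also have "\<dots> = (if x = 1 then m else 0)" by simp
  finally show ?thesis .
qed

lemma Cn_vt: assumes k: "k < m" and c: "1 \<le> c" "c \<le> n - 1"
  shows "C m n n (vt n k c) x = (if x \<in> layer m n c then 1 else 0)"
proof -
  have "C m n n (vt n k c) x = C m n ((n - c) + c) (vt n k c) x" using c by simp
  also have "\<dots> = (\<Sum>y\<in>dw_verts m n. (if y = 1 then 1 else 0) * C m n c y x)"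
    unfolding concat using toOne[OF n3 k c] by simp
  also have "\<dots> = C m n c 1 x" by (rule sum_pt[OF n3]) (auto simp: dw_verts_def)
  also have "\<dots> = (if x \<in> layer m n c then 1 else 0)" using fromOne[OF n3 c] by simp
  finally show ?thesis .
qed

lemma key: "C m n (n + (n - 1)) i j = m * C m n (n - 1) i j"
proof (cases "i \<in> dw_verts m n")
  case True
  then consider "i = 1" | k c where "k < m" "1 \<le> c" "c \<le> n - 1" "i = vt n k c"
    using V_cases n3 by blast
  then show ?thesis
  proof cases
    case 1
    have "C m n (n + (n - 1)) i j = (\<Sum>x\<in>dw_verts m n. (if x = 1 then 1 else 0) * (m * C m n (n - 1) x j))"
      unfolding concat 1 Cn_one by (intro sum.cong) auto
    also have "\<dots> = m * C m n (n - 1) 1 j" by (rule sum_pt[OF n3]) (auto simp: dw_verts_def)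
    finally show ?thesis using 1 by simp
  next
    case 2
    have "C m n (n + (n - 1)) i j = (\<Sum>x\<in>dw_verts m n. (if x \<in> layer m n c then 1 else 0) * C m n (n - 1) x j)"
      unfolding concat 2 using Cn_vt[OF 2(1-3)] by simp
    also have "\<dots> = (\<Sum>k'<m. C m n (n - 1) (vt n k' c) j)"
      by (rule sum_layer[OF n3]) (use 2 in auto)
    also have "\<dots> = (\<Sum>k'<m. C m n (n - 1) (vt n k c) j)"
      using CN_vt 2 by (intro sum.cong) auto
    finally show ?thesis using 2 by simp
  qed
qed (simp add: Cout)

lemma main: "C m n ((q + 1) * n - 1) i j = m ^ q * C m n (n - 1) i j"
proof (induction q arbitrary: i)
  case 0 then show ?case by simp
next
  case (Suc q)
  have "C m n ((Suc q + 1) * n - 1) i j = C m n (n + ((q + 1) * n - 1)) i j"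
    using n3 by (simp add: algebra_simps)
  also have "\<dots> = (\<Sum>x\<in>dw_verts m n. C m n n i x * (m ^ q * C m n (n - 1) x j))"
    unfolding concat Suc.IH by simp
  also have "\<dots> = m ^ q * (\<Sum>x\<in>dw_verts m n. C m n n i x * C m n (n - 1) x j)"
    by (simp add: sum_distrib_left algebra_simps)
  also have "\<dots> = m ^ q * C m n (n + (n - 1)) i j" unfolding concat ..
  also have "\<dots> = m ^ Suc q * C m n (n - 1) i j" unfolding key by simp
  finally show ?case .
qed

end

theorem lemma2p6:
  fixes m n p i j :: nat
  assumes "m \<ge> 1" and "n \<ge> 3" and "p \<ge> 2"
    and "i \<in> dw_verts m n" and "j \<in> dw_verts m n"
  shows "(dw_walks m n (p * n - 1) i j \<noteq> {} \<longleftrightarrow> dw_walks m n (n - 1) i j \<noteq> {}) \<and>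
         (dw_walks m n (n - 1) i j \<noteq> {} \<longrightarrow> card (dw_walks m n (p * n - 1) i j) = m ^ (p - 1))"
proof -
  have ne: "\<And>L. dw_walks m n L i j \<noteq> {} \<longleftrightarrow> C m n L i j \<noteq> 0"
    unfolding C_def using finite_walks by auto
  have M: "C m n (p * n - 1) i j = m ^ (p - 1) * C m n (n - 1) i j"
    using main[OF assms(2), where q="p - 1" and m=m and i=i and j=j] assms(3) by simp
  have pos: "m ^ (p - 1) \<noteq> 0" using assms(1) by simp
  have le: "C m n (n - 1) i j \<le> 1" using CN_le1[OF assms(2)] .
  show ?thesis unfolding ne using M pos le unfolding C_def[symmetric]
    by (metis le_antisym less_one mult.right_neutral mult_is_0 not_le)
qed

end
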